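(* Let $\mathcal X=\{X_1,\dots,X_n\}$, $n\in\mathbb N$, be a multi-set of real symmetric $2\times2$ matrices, let $\lambda_1$ be (one of) the largest eigenvalue(s) of all these matrices, attained by $X_1$ with normalised eigenvector $u_1$, and let $v_1\perp u_1$ be a normalised vector. Let $\mathcal V^{\lambda_1}_{\sup}(\mathcal X)$ be the set of unit vectors $v$ such that $Xv=\lambda_1v$ for some $X\in\mathcal X$. Then $$\mathrm{Sup}_{\mathrm{LE}}(\mathcal X)=\begin{cases}\lambda_1I,&\text{if }\lambda_1\text{ is not unique and there is }v\in\mathcal V^{\lambda_1}_{\sup}(\mathcal X)\text{ with }v\neq\pm u_1,\\ \lambda_1u_1u_1^{\mathsf T}+\mu_*v_1v_1^{\mathsf T},&\text{otherwise,}\end{cases}$$ where $\mu_*\le\lambda_1$ is the largest eigenvalue of $\mathcal X$ (other than the occurrence $\lambda_1$ of $X_1$) whose associated eigenvector is not aligned with $u_1$.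
   Context: $I$ is the $2\times2$ identity. Every real symmetric $2\times2$ matrix $X_i$ is written in spectral form $X_i=\lambda_i u_iu_i^{\mathsf T}+\mu_i v_iv_i^{\mathsf T}$ with $\lambda_i\ge\mu_i$ and orthonormal $u_i,v_i$. "The eigenvalues of $\mathcal X$" means the multi-set of all $2n$ numbers $\lambda_1,\mu_1,\dots,\lambda_n,\mu_n$, each with its associated eigenvector; an eigenvalue is unique if it occurs exactly once in this multi-set. Two unit vectors are aligned if they are equal up to sign. The log-exp-supremum is $\mathrm{Sup}_{\mathrm{LE}}(\mathcal X):=\lim_{m\to\infty}\frac1m\log\sum_{i=1}^n\exp(mX_i)$ (matrix exponential and logarithm). *)

theory Defs
  imports "HOL-Analysis.Analysis"
begin

type_synonym mat2 = "real^2^2"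

fun matpow :: "mat2 \<Rightarrow> nat \<Rightarrow> mat2" where
  "matpow A 0 = mat 1"
| "matpow A (Suc k) = A ** matpow A k"

definition mexp :: "mat2 \<Rightarrow> mat2" where
  "mexp A = (\<Sum>k. (1 / fact k) *\<^sub>R matpow A k)"

text \<open>Matrix logarithm: the (unique) real symmetric logarithm, used only for
  symmetric positive definite arguments.\<close>
definition mlog :: "mat2 \<Rightarrow> mat2" where
  "mlog M = (THE L. transpose L = L \<and> mexp L = M)"

definition outer :: "real^2 \<Rightarrow> real^2 \<Rightarrow> mat2" where
  "outer a b = (\<chi> r c. a $ r * b $ c)"

definition aligned :: "real^2 \<Rightarrow> real^2 \<Rightarrow> bool" where
  "aligned a b \<longleftrightarrow> a = b \<or> a = - b"

definition has_sup_LE :: "nat \<Rightarrow> (nat \<Rightarrow> mat2) \<Rightarrow> mat2 \<Rightarrow> bool" where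
  "has_sup_LE n X S \<longleftrightarrow>
     ((\<lambda>m::real. (1 / m) *\<^sub>R mlog (\<Sum>i\<in>{1..n}. mexp (m *\<^sub>R X i))) \<longlongrightarrow> S) at_top"

text \<open>Occurrences of eigenvalues: (i,0) is lambda_i with eigenvector u_i,
  (i,1) is mu_i with eigenvector v_i, for i in {1..n}.\<close>
definition occ :: "nat \<Rightarrow> (nat \<times> nat) set" where
  "occ n = {1..n} \<times> {0, 1}"

definition eigval :: "(nat \<Rightarrow> real) \<Rightarrow> (nat \<Rightarrow> real) \<Rightarrow> nat \<times> nat \<Rightarrow> real" where
  "eigval lam mu p = (if snd p = 0 then lam (fst p) else mu (fst p))"

definition eigvec :: "(nat \<Rightarrow> real^2) \<Rightarrow> (nat \<Rightarrow> real^2) \<Rightarrow> nat \<times> nat \<Rightarrow> real^2" where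
  "eigvec u v p = (if snd p = 0 then u (fst p) else v (fst p))"

end

theory Submission
  imports Defs
begin
lemma inner2: "(x::real^2) \<bullet> y = x$1 * y$1 + x$2 * y$2"
  by (simp add: inner_vec_def sum_2)

lemma outer_nth[simp]: "outer a b $ i $ j = a $ i * b $ j"
  by (simp add: outer_def)

lemma outer_mult_vec: "outer a b *v x = (b \<bullet> x) *\<^sub>R a"
  by (simp add: vec_eq_iff matrix_vector_mult_def inner2 sum_2 forall_2 algebra_simps)

lemma outer_mult: "outer a b ** outer c d = (b \<bullet> c) *\<^sub>R outer a d"
  by (simp add: vec_eq_iff matrix_matrix_mult_def inner2 sum_2 forall_2 algebra_simps)

lemma transpose_outer: "transpose (outer a b) = outer b a"
  by (simp add: vec_eq_iff transpose_def)

lemma ortho_complete: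
  assumes "norm (a::real^2) = 1" "norm b = 1" "a \<bullet> b = 0"
  shows "outer a a + outer b b = mat 1"
proof -
  have h1: "a$1*a$1 + a$2*a$2 = 1" using assms(1) by (simp add: norm_eq_1 inner2)
  have h2: "b$1*b$1 + b$2*b$2 = 1" using assms(2) by (simp add: norm_eq_1 inner2)
  have h3: "a$1*b$1 + a$2*b$2 = 0" using assms(3) by (simp add: inner2)
  define d where "d = a$1*b$2 - a$2*b$1"
  have "d*d = (a$1*a$1 + a$2*a$2)*(b$1*b$1 + b$2*b$2) - (a$1*b$1 + a$2*b$2)^2"
    unfolding d_def by (simp add: power2_eq_square algebra_simps)
  hence dd: "d*d = 1" using h1 h2 h3 by simp
  have e2: "b$2 = d * a$1"
  proof -
    have "d * a$1 = a$1*a$1*b$2 - a$1*b$1*a$2" unfolding d_def by (simp add: algebra_simps)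
    also have "a$1*b$1 = - (a$2*b$2)" using h3 by linarith
    finally have "d*a$1 = (a$1*a$1 + a$2*a$2)*b$2" by (simp add: algebra_simps)
    thus ?thesis using h1 by simp
  qed
  have e1: "b$1 = - d * a$2"
  proof -
    have "- d * a$2 = a$2*a$2*b$1 - a$1*(a$2*b$2)" unfolding d_def by (simp add: algebra_simps)
    also have "a$2*b$2 = - (a$1*b$1)" using h3 by linarith
    finally have "- d*a$2 = (a$1*a$1 + a$2*a$2)*b$1" by (simp add: algebra_simps)
    thus ?thesis using h1 by simp
  qed
  have "b$1*b$1 = (d*d)*(a$2*a$2)" using e1 by (simp add: algebra_simps)
  hence "a$1*a$1 + b$1*b$1 = 1" using h1 dd by simp
  moreover have "b$2*b$2 = (d*d)*(a$1*a$1)" using e2 by (simp add: algebra_simps)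
  hence "a$2*a$2 + b$2*b$2 = 1" using h1 dd by simp
  moreover have "a$1*a$2 + b$1*b$2 = 0"
  proof -
    have "b$1*b$2 = - (d*d) * (a$1*a$2)" using e1 e2 by (simp add: algebra_simps)
    thus ?thesis using dd by simp
  qed
  ultimately show ?thesis
    by (simp add: vec_eq_iff forall_2 mat_def algebra_simps)
qed

definition "orthn a b \<longleftrightarrow> norm (a::real^2) = 1 \<and> norm b = 1 \<and> a \<bullet> b = 0"

lemma orthn_sym: "orthn a b \<Longrightarrow> orthn b a"
  by (simp add: orthn_def inner_commute)

lemma orthn_dots: "orthn a b \<Longrightarrow> a \<bullet> a = 1 \<and> b \<bullet> b = 1 \<and> a \<bullet> b = 0 \<and> b \<bullet> a = 0"
  by (simp add: orthn_def norm_eq_1 inner_commute)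

lemma expand:
  assumes "orthn a b" shows "x = (a \<bullet> x) *\<^sub>R a + (b \<bullet> x) *\<^sub>R b"
proof -
  have "x = mat 1 *v x" by simp
  also have "\<dots> = (outer a a + outer b b) *v x" using ortho_complete assms by (simp add: orthn_def)
  finally show ?thesis by (simp add: matrix_vector_mult_add_rdistrib outer_mult_vec)
qed

lemma expand_sq:
  assumes "orthn a b" shows "(a \<bullet> x)^2 + (b \<bullet> x)^2 = x \<bullet> x"
proof -
  have "x \<bullet> x = ((a \<bullet> x) *\<^sub>R a + (b \<bullet> x) *\<^sub>R b) \<bullet> ((a \<bullet> x) *\<^sub>R a + (b \<bullet> x) *\<^sub>R b)"
    by (rule arg_cong[where f="\<lambda>z. z \<bullet> z"]) (rule expand[OF assms])
  also have "\<dots> = (a \<bullet> x)^2 + (b \<bullet> x)^2"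
    using orthn_dots[OF assms] by (simp add: inner_add_left inner_add_right power2_eq_square)
  finally show ?thesis by simp
qed

lemma mm_add_r: "((A::mat2) + B) ** C = A ** C + B ** C"
  by (simp add: vec_eq_iff matrix_matrix_mult_def sum_2 forall_2 algebra_simps)
lemma mm_add_l: "(C::mat2) ** (A + B) = C ** A + C ** B"
  by (simp add: vec_eq_iff matrix_matrix_mult_def sum_2 forall_2 algebra_simps)
lemma mm_scale_l: "(c *\<^sub>R (A::mat2)) ** B = c *\<^sub>R (A ** B)"
  by (simp add: vec_eq_iff matrix_matrix_mult_def sum_2 forall_2 algebra_simps)
lemma mm_scale_r: "(A::mat2) ** (c *\<^sub>R B) = c *\<^sub>R (A ** B)"
  by (simp add: vec_eq_iff matrix_matrix_mult_def sum_2 forall_2 algebra_simps)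
lemma mv_scale_l: "(c *\<^sub>R (A::mat2)) *v x = c *\<^sub>R (A *v x)"
  by (simp add: vec_eq_iff matrix_vector_mult_def sum_2 forall_2 algebra_simps)
lemma mv_add_l: "((A::mat2) + B) *v x = A *v x + B *v x"
  by (simp add: vec_eq_iff matrix_vector_mult_def sum_2 forall_2 algebra_simps)

lemma matpow_spec:
  assumes "orthn a b"
  shows "matpow (\<alpha> *\<^sub>R outer a a + \<beta> *\<^sub>R outer b b) k = \<alpha>^k *\<^sub>R outer a a + \<beta>^k *\<^sub>R outer b b"
proof (induction k)
  case 0 then show ?case using ortho_complete assms by (simp add: orthn_def)
next
  case (Suc k)
  have d: "a \<bullet> a = 1" "b \<bullet> b = 1" "a \<bullet> b = 0" "b \<bullet> a = 0" using orthn_dots[OF assms] by auto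
  show ?case using Suc
    by (simp add: mm_add_r mm_add_l mm_scale_l mm_scale_r
        outer_mult d power_Suc2 del: power_Suc)
qed

lemma mexp_spec:
  assumes "orthn a b"
  shows "mexp (\<alpha> *\<^sub>R outer a a + \<beta> *\<^sub>R outer b b) = exp \<alpha> *\<^sub>R outer a a + exp \<beta> *\<^sub>R outer b b"
proof -
  have "(\<lambda>k. (1 / fact k) *\<^sub>R matpow (\<alpha> *\<^sub>R outer a a + \<beta> *\<^sub>R outer b b) k)
     = (\<lambda>k. (\<alpha>^k /\<^sub>R fact k) *\<^sub>R outer a a + (\<beta>^k /\<^sub>R fact k) *\<^sub>R outer b b)"
    by (simp add: matpow_spec[OF assms] scaleR_add_right divide_inverse_commute)
  also have "(\<lambda>k. (\<alpha>^k /\<^sub>R fact k) *\<^sub>R outer a a + (\<beta>^k /\<^sub>R fact k) *\<^sub>R outer b b) sums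
      (exp \<alpha> *\<^sub>R outer a a + exp \<beta> *\<^sub>R outer b b)"
    by (intro sums_add sums_scaleR_left exp_converges)
  finally show ?thesis unfolding mexp_def by (rule sums_unique[symmetric])
qed

lemma orthn_coords: "orthn a b \<longleftrightarrow> a$1*a$1 + a$2*a$2 = 1 \<and> b$1*b$1 + b$2*b$2 = 1 \<and> a$1*b$1 + a$2*b$2 = 0"
  by (simp add: orthn_def norm_eq_1 inner2)

lemma spectral2:
  assumes "transpose M = (M::mat2)"
  shows "\<exists>a b \<alpha> \<beta>. orthn a b \<and> \<alpha> \<ge> \<beta> \<and> M = \<alpha> *\<^sub>R outer a a + \<beta> *\<^sub>R outer b b"
proof -
  define p where "p = M$1$1"
  define q where "q = M$1$2"
  define r where "r = M$2$2"
  have "transpose M $ 2 $ 1 = M $ 1 $ 2" by (simp add: transpose_def)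
  hence q2: "M$2$1 = q" unfolding q_def using assms by simp
  show ?thesis
  proof (cases "q = 0")
    case True
    show ?thesis
    proof (cases "p \<ge> r")
      case True
      show ?thesis
        apply (rule exI[of _ "vector[1,0]"], rule exI[of _ "vector[0,1]"], rule exI[of _ p], rule exI[of _ r])
        using True \<open>q = 0\<close> q2 by (simp add: orthn_coords vec_eq_iff forall_2 p_def q_def r_def)
    next
      case False
      show ?thesis
        apply (rule exI[of _ "vector[0,1]"], rule exI[of _ "vector[1,0]"], rule exI[of _ r], rule exI[of _ p])
        using False \<open>q = 0\<close> q2 by (simp add: orthn_coords vec_eq_iff forall_2 p_def q_def r_def)
    qed
  next
    case False
    define sg where "sg = sqrt (((p-r)/2)^2 + q^2)"
    have qq: "q^2 > 0" using False by simp
    have s2: "sg^2 = ((p-r)/2)^2 + q^2" unfolding sg_def by simp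
    have sgt: "\<bar>(r-p)/2\<bar> < sg"
    proof -
      have "sqrt (((r-p)/2)^2) < sg" unfolding sg_def
      proof (rule real_sqrt_less_mono)
        have "((r-p)/2)^2 = ((p-r)/2)^2" by (simp add: power2_eq_square algebra_simps)
        thus "((r-p)/2)^2 < ((p-r)/2)^2 + q^2" using qq by simp
      qed
      thus ?thesis by simp
    qed
    define t where "t = (r-p)/2 + sg"
    have tpos: "t > 0" unfolding t_def using sgt by linarith
    define \<nu> where "\<nu> = sqrt (q^2 + t^2)"
    have \<nu>2: "\<nu>^2 = q^2 + t^2" unfolding \<nu>_def by simp
    have \<nu>pos: "\<nu> > 0" unfolding \<nu>_def using qq by (simp add: add_pos_nonneg)
    define \<alpha> where "\<alpha> = (p+r)/2 + sg"
    define \<beta> where "\<beta> = (p+r)/2 - sg"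
    define h where "h = (r-p)/2"
    have tdef: "t = h + sg" unfolding t_def h_def by simp
    have bp: "\<beta> - p = h - sg" unfolding \<beta>_def h_def by (simp add: field_simps)
    have ar: "\<alpha> - r = sg - h" unfolding \<alpha>_def h_def by (simp add: field_simps)
    have s2': "sg^2 = h^2 + q^2" unfolding h_def using s2 by (simp add: power2_eq_square field_simps)
    have k1: "(\<beta> - p)*t = -(q^2)"
    proof -
      have "(\<beta> - p)*t = h^2 - sg^2" unfolding bp tdef by (simp add: power2_eq_square algebra_simps)
      thus ?thesis using s2' by simp
    qed
    have k2: "(\<alpha> - r)*t = q^2"
    proof -
      have "(\<alpha> - r)*t = sg^2 - h^2" unfolding ar tdef by (simp add: power2_eq_square algebra_simps)
      thus ?thesis using s2' by simp
    qed
    have k3: "2 * sg * t = q^2 + t^2"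
    proof -
      have "2 * sg * t - t^2 = sg^2 - h^2" unfolding tdef by (simp add: power2_eq_square algebra_simps)
      thus ?thesis using s2' by simp
    qed
    have ap: "\<alpha> - p = t" unfolding \<alpha>_def t_def by (simp add: field_simps)
    have br: "\<beta> - r = - t" unfolding \<beta>_def t_def by (simp add: field_simps)
    have e11: "\<alpha> * q^2 + \<beta> * t^2 = p * (q^2 + t^2)"
    proof -
      have "\<alpha> * q^2 + \<beta> * t^2 - p * (q^2 + t^2) = (\<alpha> - p) * q^2 + ((\<beta> - p)*t)*t"
        by (simp add: power2_eq_square algebra_simps)
      also have "\<dots> = 0" using ap k1 by (simp add: power2_eq_square)
      finally show ?thesis by simp
    qed
    have e22: "\<alpha> * t^2 + \<beta> * q^2 = r * (q^2 + t^2)"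
    proof -
      have "\<alpha> * t^2 + \<beta> * q^2 - r * (q^2 + t^2) = ((\<alpha> - r)*t)*t + (\<beta> - r) * q^2"
        by (simp add: power2_eq_square algebra_simps)
      also have "\<dots> = 0" using br k2 by (simp add: power2_eq_square)
      finally show ?thesis by simp
    qed
    have e12: "(\<alpha> - \<beta>) * q * t = q * (q^2 + t^2)"
    proof -
      have "(\<alpha> - \<beta>) * q * t = q * (2 * sg * t)" unfolding \<alpha>_def \<beta>_def by (simp add: algebra_simps)
      thus ?thesis using k3 by simp
    qed
    define a where "a = (vector [q/\<nu>, t/\<nu>] :: real^2)"
    define b where "b = (vector [-t/\<nu>, q/\<nu>] :: real^2)"
    have nz: "\<nu>^2 \<noteq> 0" using \<nu>pos by simp
    have o1: "q/\<nu> * (q/\<nu>) + t/\<nu> * (t/\<nu>) = 1"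
    proof -
      have "q/\<nu> * (q/\<nu>) + t/\<nu> * (t/\<nu>) = (q^2 + t^2) / \<nu>^2"
        by (simp add: power2_eq_square add_divide_distrib)
      thus ?thesis using \<nu>2 nz by simp
    qed
    have "orthn a b"
      unfolding orthn_coords a_def b_def using o1
      by (simp add: algebra_simps)
    moreover have "\<alpha> \<ge> \<beta>" unfolding \<alpha>_def \<beta>_def sg_def by simp
    moreover have "M = \<alpha> *\<^sub>R outer a a + \<beta> *\<^sub>R outer b b"
    proof -
      have f11: "\<alpha> * (q/\<nu> * (q/\<nu>)) + \<beta> * (-t/\<nu> * (-t/\<nu>)) = p"
      proof -
        have "\<alpha> * (q/\<nu> * (q/\<nu>)) + \<beta> * (-t/\<nu> * (-t/\<nu>)) = (\<alpha> * q^2 + \<beta> * t^2) / \<nu>^2"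
          using \<nu>pos by (simp add: field_simps power2_eq_square)
        thus ?thesis using e11 \<nu>2 nz False by simp
      qed
      have f22: "\<alpha> * (t/\<nu> * (t/\<nu>)) + \<beta> * (q/\<nu> * (q/\<nu>)) = r"
      proof -
        have "\<alpha> * (t/\<nu> * (t/\<nu>)) + \<beta> * (q/\<nu> * (q/\<nu>)) = (\<alpha> * t^2 + \<beta> * q^2) / \<nu>^2"
          using \<nu>pos by (simp add: field_simps power2_eq_square)
        thus ?thesis using e22 \<nu>2 nz False by simp
      qed
      have f12: "\<alpha> * (q/\<nu> * (t/\<nu>)) + \<beta> * (-t/\<nu> * (q/\<nu>)) = q"
      proof -
        have "\<alpha> * (q/\<nu> * (t/\<nu>)) + \<beta> * (-t/\<nu> * (q/\<nu>)) = ((\<alpha> - \<beta>) * q * t) / \<nu>^2"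
          using \<nu>pos by (simp add: field_simps power2_eq_square)
        thus ?thesis using e12 \<nu>2 nz False by simp
      qed
      have f21: "\<alpha> * (t/\<nu> * (q/\<nu>)) + \<beta> * (q/\<nu> * (-t/\<nu>)) = q"
        using f12 by (simp add: algebra_simps)
      show ?thesis
        using f11 f22 f12 f21 q2
        by (simp add: vec_eq_iff forall_2 a_def b_def p_def q_def r_def)
    qed
    ultimately show ?thesis by blast
  qed
qed

lemma mm_outer: "(A::mat2) ** outer x y = outer (A *v x) y"
  by (simp add: vec_eq_iff matrix_matrix_mult_def matrix_vector_mult_def sum_2 forall_2 algebra_simps)

lemma spec_apply:
  assumes "orthn a b"
  shows "(\<alpha> *\<^sub>R outer a a + \<beta> *\<^sub>R outer b b) *v x = (\<alpha> * (a \<bullet> x)) *\<^sub>R a + (\<beta> * (b \<bullet> x)) *\<^sub>R b"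
  by (simp add: mv_add_l mv_scale_l outer_mult_vec)

lemma log_act:
  assumes o: "orthn c d" and \<sigma>: "\<sigma> > 0"
    and Mx: "(exp \<gamma> *\<^sub>R outer c c + exp \<delta> *\<^sub>R outer d d) *v x = \<sigma> *\<^sub>R x"
  shows "(\<gamma> *\<^sub>R outer c c + \<delta> *\<^sub>R outer d d) *v x = ln \<sigma> *\<^sub>R x"
proof -
  have dd: "c \<bullet> c = 1" "d \<bullet> d = 1" "c \<bullet> d = 0" "d \<bullet> c = 0" using orthn_dots[OF o] by auto
  have M: "(exp \<gamma> * (c \<bullet> x)) *\<^sub>R c + (exp \<delta> * (d \<bullet> x)) *\<^sub>R d = \<sigma> *\<^sub>R x"
    using Mx spec_apply[OF o] by simp
  have h1: "exp \<gamma> * (c \<bullet> x) = \<sigma> * (c \<bullet> x)"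
  proof -
    have "c \<bullet> ((exp \<gamma> * (c \<bullet> x)) *\<^sub>R c + (exp \<delta> * (d \<bullet> x)) *\<^sub>R d) = c \<bullet> (\<sigma> *\<^sub>R x)"
      using M by simp
    thus ?thesis using dd by (simp add: inner_add_right)
  qed
  have h2: "exp \<delta> * (d \<bullet> x) = \<sigma> * (d \<bullet> x)"
  proof -
    have "d \<bullet> ((exp \<gamma> * (c \<bullet> x)) *\<^sub>R c + (exp \<delta> * (d \<bullet> x)) *\<^sub>R d) = d \<bullet> (\<sigma> *\<^sub>R x)"
      using M by simp
    thus ?thesis using dd by (simp add: inner_add_right)
  qed
  have g1: "\<gamma> * (c \<bullet> x) = ln \<sigma> * (c \<bullet> x)"
  proof (cases "c \<bullet> x = 0")
    case False
    hence "exp \<gamma> = \<sigma>" using h1 by simp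
    hence "\<gamma> = ln \<sigma>" by auto
    thus ?thesis by simp
  qed simp
  have g2: "\<delta> * (d \<bullet> x) = ln \<sigma> * (d \<bullet> x)"
  proof (cases "d \<bullet> x = 0")
    case False
    hence "exp \<delta> = \<sigma>" using h2 by simp
    hence "\<delta> = ln \<sigma>" by auto
    thus ?thesis by simp
  qed simp
  have "(\<gamma> *\<^sub>R outer c c + \<delta> *\<^sub>R outer d d) *v x = (ln \<sigma> * (c \<bullet> x)) *\<^sub>R c + (ln \<sigma> * (d \<bullet> x)) *\<^sub>R d"
    by (simp only: spec_apply[OF o] g1 g2)
  also have "\<dots> = ln \<sigma> *\<^sub>R ((c \<bullet> x) *\<^sub>R c + (d \<bullet> x) *\<^sub>R d)"
    by (simp add: scaleR_add_right)
  also have "\<dots> = ln \<sigma> *\<^sub>R x" using expand[OF o, of x] by simp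
  finally show ?thesis .
qed

lemma transpose_spec: "transpose (\<alpha> *\<^sub>R outer a a + \<beta> *\<^sub>R outer b b) = \<alpha> *\<^sub>R outer a a + \<beta> *\<^sub>R outer b b"
  by (simp add: vec_eq_iff forall_2 transpose_def mult.commute)

lemma mlog_spec:
  assumes o: "orthn a b" and p1: "\<sigma>1 > 0" and p2: "\<sigma>2 > 0"
  shows "mlog (\<sigma>1 *\<^sub>R outer a a + \<sigma>2 *\<^sub>R outer b b) = ln \<sigma>1 *\<^sub>R outer a a + ln \<sigma>2 *\<^sub>R outer b b"
  unfolding mlog_def
proof (rule the_equality)
  show "transpose (ln \<sigma>1 *\<^sub>R outer a a + ln \<sigma>2 *\<^sub>R outer b b) = ln \<sigma>1 *\<^sub>R outer a a + ln \<sigma>2 *\<^sub>R outer b b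
      \<and> mexp (ln \<sigma>1 *\<^sub>R outer a a + ln \<sigma>2 *\<^sub>R outer b b) = \<sigma>1 *\<^sub>R outer a a + \<sigma>2 *\<^sub>R outer b b"
    using mexp_spec[OF o] p1 p2 transpose_spec by simp
next
  fix L assume L: "transpose L = L \<and> mexp L = \<sigma>1 *\<^sub>R outer a a + \<sigma>2 *\<^sub>R outer b b"
  then obtain c d \<gamma> \<delta> where o2: "orthn c d" and Ld: "L = \<gamma> *\<^sub>R outer c c + \<delta> *\<^sub>R outer d d"
    using spectral2 by blast
  have Me: "exp \<gamma> *\<^sub>R outer c c + exp \<delta> *\<^sub>R outer d d = \<sigma>1 *\<^sub>R outer a a + \<sigma>2 *\<^sub>R outer b b"
    using L Ld mexp_spec[OF o2] by simp
  have dd: "a \<bullet> a = 1" "b \<bullet> b = 1" "a \<bullet> b = 0" "b \<bullet> a = 0" using orthn_dots[OF o] by auto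
  have La: "L *v a = ln \<sigma>1 *\<^sub>R a"
    unfolding Ld by (rule log_act[OF o2 p1]) (simp add: Me spec_apply[OF o] dd)
  have Lb: "L *v b = ln \<sigma>2 *\<^sub>R b"
    unfolding Ld by (rule log_act[OF o2 p2]) (simp add: Me spec_apply[OF o] dd)
  have "L = L ** mat 1" by simp
  also have "\<dots> = L ** (outer a a + outer b b)" using ortho_complete o by (simp add: orthn_def)
  also have "\<dots> = outer (L *v a) a + outer (L *v b) b" by (simp add: mm_add_l mm_outer)
  also have "\<dots> = ln \<sigma>1 *\<^sub>R outer a a + ln \<sigma>2 *\<^sub>R outer b b"
    by (simp add: La Lb vec_eq_iff)
  finally show "L = ln \<sigma>1 *\<^sub>R outer a a + ln \<sigma>2 *\<^sub>R outer b b" .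
qed

lemma msum_mv: "finite Oc \<Longrightarrow> (\<Sum>p\<in>Oc. (A p :: mat2)) *v x = (\<Sum>p\<in>Oc. A p *v x)"
  by (induction Oc rule: finite_induct) (simp_all add: mv_add_l)

lemma transpose_add2: "transpose ((A::mat2) + B) = transpose A + transpose B"
  by (simp add: vec_eq_iff transpose_def)

lemma transpose_zero2: "transpose (0::mat2) = 0"
  by (simp add: vec_eq_iff transpose_def)

lemma msum_transpose: "finite Oc \<Longrightarrow> transpose (\<Sum>p\<in>Oc. (A p :: mat2)) = (\<Sum>p\<in>Oc. transpose (A p))"
  by (induction Oc rule: finite_induct) (simp_all add: transpose_add2 transpose_zero2)

definition G :: "'a set \<Rightarrow> ('a \<Rightarrow> real) \<Rightarrow> ('a \<Rightarrow> real^2) \<Rightarrow> mat2" where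
  "G Oc c w = (\<Sum>p\<in>Oc. c p *\<^sub>R outer (w p) (w p))"

lemma G_sym: "finite Oc \<Longrightarrow> transpose (G Oc c w) = G Oc c w"
  unfolding G_def by (simp add: msum_transpose transpose_scalar transpose_outer)

lemma G_apply: "finite Oc \<Longrightarrow> G Oc c w *v x = (\<Sum>p\<in>Oc. (c p * (w p \<bullet> x)) *\<^sub>R w p)"
  unfolding G_def by (simp add: msum_mv mv_scale_l outer_mult_vec)

lemma G_form: "finite Oc \<Longrightarrow> y \<bullet> (G Oc c w *v x) = (\<Sum>p\<in>Oc. c p * (w p \<bullet> x) * (y \<bullet> w p))"
  by (simp add: G_apply inner_sum_right)

lemma G_quad: "finite Oc \<Longrightarrow> x \<bullet> (G Oc c w *v x) = (\<Sum>p\<in>Oc. c p * (w p \<bullet> x)^2)"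
  by (simp add: G_form power2_eq_square inner_commute mult.assoc)

lemma sq_ineq:
  fixes c z \<alpha> \<beta> :: real
  assumes "c^2 + z^2 = 1" "\<alpha>^2 + \<beta>^2 = 1"
  shows "c^2 + (c*\<alpha> + z*\<beta>)^2 \<ge> \<beta>^2 / 2"
proof -
  define t where "t = c*\<alpha> + z*\<beta>"
  have "(\<beta>*z)^2 = (t - c*\<alpha>)^2" unfolding t_def by (simp add: mult.commute)
  also have "\<dots> \<le> 2*t^2 + 2*(c*\<alpha>)^2"
  proof -
    have "0 \<le> (t + c*\<alpha>)^2" by simp
    thus ?thesis by (simp add: power2_eq_square algebra_simps)
  qed
  finally have h: "\<beta>^2 * z^2 \<le> 2*t^2 + 2*c^2*\<alpha>^2" by (simp add: power_mult_distrib)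
  have "\<beta>^2 = \<beta>^2 * c^2 + \<beta>^2 * z^2" using assms(1) by (metis distrib_left mult.right_neutral)
  also have "\<dots> \<le> \<beta>^2 * c^2 + 2*t^2 + 2*c^2*\<alpha>^2" using h by simp
  also have "\<dots> = c^2 * (\<alpha>^2 + \<beta>^2) + c^2 * \<alpha>^2 + 2*t^2" by (simp add: algebra_simps)
  also have "\<dots> \<le> c^2 * 1 + c^2 * 1 + 2*t^2"
  proof -
    have "\<alpha>^2 \<le> 1" using assms(2) by (metis le_add_same_cancel1 zero_le_power2)
    hence "c^2 * \<alpha>^2 \<le> c^2 * 1" using mult_left_mono[of "\<alpha>^2" 1 "c^2"] by simp
    thus ?thesis using assms(2) by simp
  qed
  finally show ?thesis unfolding t_def by simp
qed

lemma inner_le1: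
  assumes "norm (x::real^2) = 1" "norm y = 1"
  shows "\<bar>x \<bullet> y\<bar> \<le> 1" "(x \<bullet> y)^2 \<le> 1"
proof -
  show "\<bar>x \<bullet> y\<bar> \<le> 1" using Cauchy_Schwarz_ineq2[of x y] assms by simp
  thus "(x \<bullet> y)^2 \<le> 1" by (simp add: abs_square_le_1)
qed

lemma aligned_v:
  assumes "orthn u1 v1" "aligned w u1" shows "v1 \<bullet> w = 0"
  using assms orthn_dots[OF assms(1)] unfolding aligned_def by auto

lemma not_aligned_beta:
  assumes o: "orthn u1 v1" and nw: "norm w = 1" and na: "\<not> aligned w u1"
  shows "(v1 \<bullet> w)^2 > 0"
proof (rule ccontr)
  assume "\<not> (v1 \<bullet> w)^2 > 0"
  hence z: "v1 \<bullet> w = 0" by simp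
  have w: "w = (u1 \<bullet> w) *\<^sub>R u1" using expand[OF o, of w] z by simp
  have "(u1 \<bullet> w)^2 = 1" using expand_sq[OF o, of w] z nw by (simp add: norm_eq_1)
  hence "u1 \<bullet> w = 1 \<or> u1 \<bullet> w = -1" by (simp add: power2_eq_1_iff)
  hence "aligned w u1" using w unfolding aligned_def by auto
  thus False using na by simp
qed

lemma rayleigh:
  assumes o: "orthn a b" and S: "S = \<sigma>1 *\<^sub>R outer a a + \<sigma>2 *\<^sub>R outer b b" and ord: "\<sigma>2 \<le> \<sigma>1"
    and nx: "norm x = 1"
  shows "\<sigma>2 \<le> x \<bullet> (S *v x)" "x \<bullet> (S *v x) \<le> \<sigma>1"
proof -
  have q: "x \<bullet> (S *v x) = \<sigma>1 * (a \<bullet> x)^2 + \<sigma>2 * (b \<bullet> x)^2"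
    unfolding S spec_apply[OF o] by (simp add: inner_add_right inner_commute power2_eq_square)
  have one: "(a \<bullet> x)^2 + (b \<bullet> x)^2 = 1" using expand_sq[OF o, of x] nx by (simp add: norm_eq_1)
  have "\<sigma>2 = \<sigma>2 * (a \<bullet> x)^2 + \<sigma>2 * (b \<bullet> x)^2" using one by (metis distrib_left mult.right_neutral)
  also have "\<dots> \<le> \<sigma>1 * (a \<bullet> x)^2 + \<sigma>2 * (b \<bullet> x)^2" using ord by (simp add: mult_right_mono)
  finally show "\<sigma>2 \<le> x \<bullet> (S *v x)" using q by simp
  have "\<sigma>1 * (a \<bullet> x)^2 + \<sigma>2 * (b \<bullet> x)^2 \<le> \<sigma>1 * (a \<bullet> x)^2 + \<sigma>1 * (b \<bullet> x)^2" using ord by (simp add: mult_right_mono)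
  also have "\<dots> = \<sigma>1" using one by (metis distrib_left mult.right_neutral)
  finally show "x \<bullet> (S *v x) \<le> \<sigma>1" using q by simp
qed

lemma spec_vals:
  assumes o: "orthn a b" and S: "S = \<sigma>1 *\<^sub>R outer a a + \<sigma>2 *\<^sub>R outer b b"
  shows "S *v a = \<sigma>1 *\<^sub>R a" "a \<bullet> (S *v a) = \<sigma>1" "b \<bullet> (S *v b) = \<sigma>2"
  using orthn_dots[OF o] unfolding S spec_apply[OF o] by (simp_all add: inner_add_right)

lemma bounds:
  fixes Oc :: "'a set" and e :: "'a \<Rightarrow> real" and w :: "'a \<Rightarrow> real^2"
  assumes fin: "finite Oc" and unit: "\<And>p. p \<in> Oc \<Longrightarrow> norm (w p) = 1"
    and le: "\<And>p. p \<in> Oc \<Longrightarrow> e p \<le> L"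
    and p0: "p0 \<in> Oc" "w p0 = u1" "e p0 = L"
    and ps: "ps \<in> Oc" "ps \<noteq> p0" "\<not> aligned (w ps) u1"
    and o1: "orthn u1 v1"
    and Sd: "G Oc (\<lambda>p. exp (m * e p)) w = \<sigma>1 *\<^sub>R outer a a + \<sigma>2 *\<^sub>R outer b b"
    and oab: "orthn a b" and ord: "\<sigma>2 \<le> \<sigma>1" and m: "m \<ge> 0"
  shows "exp (m*L) \<le> \<sigma>1" "\<sigma>1 \<le> card Oc * exp (m*L)"
     "(v1 \<bullet> w ps)^2 / 2 * exp (m * e ps) \<le> \<sigma>2"
proof -
  define S where "S = G Oc (\<lambda>p. exp (m * e p)) w"
  have Sd': "S = \<sigma>1 *\<^sub>R outer a a + \<sigma>2 *\<^sub>R outer b b" using Sd S_def by simp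
  have Q: "\<And>x. x \<bullet> (S *v x) = (\<Sum>p\<in>Oc. exp (m * e p) * (w p \<bullet> x)^2)"
    unfolding S_def using G_quad[OF fin] by simp
  have nn: "\<And>p x. 0 \<le> exp (m * e p) * (w p \<bullet> x)^2" by simp
  have u1n: "norm u1 = 1" "norm v1 = 1" "u1 \<bullet> u1 = 1" using o1 orthn_dots[OF o1] by (auto simp: orthn_def)
  have an: "norm a = 1" "norm b = 1" using oab by (auto simp: orthn_def)
  have "exp (m*L) = exp (m * e p0) * (w p0 \<bullet> u1)^2" using p0 u1n by simp
  also have "\<dots> \<le> (\<Sum>p\<in>Oc. exp (m * e p) * (w p \<bullet> u1)^2)"
    by (rule member_le_sum[OF p0(1)]) (simp_all add: fin)
  also have "\<dots> = u1 \<bullet> (S *v u1)" using Q by simp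
  also have "\<dots> \<le> \<sigma>1" by (rule rayleigh(2)[OF oab Sd' ord u1n(1)])
  finally show "exp (m*L) \<le> \<sigma>1" .
  have "\<sigma>1 = a \<bullet> (S *v a)" using spec_vals[OF oab Sd'] by simp
  also have "\<dots> = (\<Sum>p\<in>Oc. exp (m * e p) * (w p \<bullet> a)^2)" using Q by simp
  also have "\<dots> \<le> (\<Sum>p\<in>Oc. exp (m*L))"
  proof (rule sum_mono)
    fix p assume p: "p \<in> Oc"
    have "exp (m * e p) \<le> exp (m*L)" using le[OF p] m by (simp add: mult_left_mono)
    moreover have "(w p \<bullet> a)^2 \<le> 1" using inner_le1(2)[OF unit[OF p] an(1)] .
    ultimately show "exp (m * e p) * (w p \<bullet> a)^2 \<le> exp (m*L)"
      by (metis exp_ge_zero mult.right_neutral mult_mono zero_le_power2 order_trans)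
  qed
  also have "\<dots> = card Oc * exp (m*L)" by simp
  finally show "\<sigma>1 \<le> card Oc * exp (m*L)" .
  define \<alpha> where "\<alpha> = u1 \<bullet> w ps"
  define \<beta> where "\<beta> = v1 \<bullet> w ps"
  define c where "c = u1 \<bullet> b"
  define z where "z = v1 \<bullet> b"
  have ab1: "\<alpha>^2 + \<beta>^2 = 1" unfolding \<alpha>_def \<beta>_def using expand_sq[OF o1, of "w ps"] unit[OF ps(1)]
    by (simp add: norm_eq_1)
  have cz1: "c^2 + z^2 = 1" unfolding c_def z_def using expand_sq[OF o1, of b] an(2)
    by (simp add: norm_eq_1)
  have wb: "w ps \<bullet> b = c*\<alpha> + z*\<beta>"
  proof -
    have "w ps \<bullet> b = (\<alpha> *\<^sub>R u1 + \<beta> *\<^sub>R v1) \<bullet> b" unfolding \<alpha>_def \<beta>_def using expand[OF o1, of "w ps"] by simp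
    thus ?thesis unfolding c_def z_def by (simp add: inner_add_left algebra_simps)
  qed
  have mu: "exp (m * e ps) \<le> exp (m*L)" using le[OF ps(1)] m by (simp add: mult_left_mono)
  have "\<beta>^2 / 2 * exp (m * e ps) \<le> (c^2 + (c*\<alpha> + z*\<beta>)^2) * exp (m * e ps)"
    using sq_ineq[OF cz1 ab1] by (simp add: mult_right_mono)
  also have "\<dots> \<le> exp (m*L) * c^2 + exp (m * e ps) * (c*\<alpha> + z*\<beta>)^2"
  proof -
    have "c^2 * exp (m * e ps) \<le> exp (m*L) * c^2" using mult_right_mono[OF mu, of "c^2"] by (simp add: mult.commute)
    thus ?thesis by (simp add: algebra_simps)
  qed
  also have "\<dots> = exp (m * e p0) * (w p0 \<bullet> b)^2 + exp (m * e ps) * (w ps \<bullet> b)^2"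
    using p0 wb unfolding c_def by (simp add: inner_commute)
  also have "\<dots> = (\<Sum>p\<in>{p0, ps}. exp (m * e p) * (w p \<bullet> b)^2)" using ps(2) by simp
  also have "\<dots> \<le> (\<Sum>p\<in>Oc. exp (m * e p) * (w p \<bullet> b)^2)"
    by (rule sum_mono2) (use fin p0 ps in auto)
  also have "\<dots> = b \<bullet> (S *v b)" using Q by simp
  also have "\<dots> = \<sigma>2" using spec_vals[OF oab Sd'] by simp
  finally show "(v1 \<bullet> w ps)^2 / 2 * exp (m * e ps) \<le> \<sigma>2" unfolding \<beta>_def .
qed

lemma boundsB:
  fixes Oc :: "'a set" and e :: "'a \<Rightarrow> real" and w :: "'a \<Rightarrow> real^2"
  assumes fin: "finite Oc" and unit: "\<And>p. p \<in> Oc \<Longrightarrow> norm (w p) = 1"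
    and hB: "\<And>p. p \<in> Oc \<Longrightarrow> \<not> aligned (w p) u1 \<Longrightarrow> e p \<le> M"
    and o1: "orthn u1 v1"
    and Sd: "G Oc (\<lambda>p. exp (m * e p)) w = \<sigma>1 *\<^sub>R outer a a + \<sigma>2 *\<^sub>R outer b b"
    and oab: "orthn a b" and ord: "\<sigma>2 \<le> \<sigma>1" and m: "m \<ge> 0"
  shows "\<sigma>2 \<le> card Oc * exp (m*M)" "\<bar>\<sigma>1 * (v1 \<bullet> a)\<bar> \<le> card Oc * exp (m*M)"
proof -
  define S where "S = G Oc (\<lambda>p. exp (m * e p)) w"
  have Sd': "S = \<sigma>1 *\<^sub>R outer a a + \<sigma>2 *\<^sub>R outer b b" using Sd S_def by simp
  have u1n: "norm u1 = 1" "norm v1 = 1" using o1 by (auto simp: orthn_def)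
  have an: "norm a = 1" "norm b = 1" using oab by (auto simp: orthn_def)
  have trm: "\<bar>exp (m * e p) * (w p \<bullet> x) * (v1 \<bullet> w p)\<bar> \<le> exp (m*M)"
    if p: "p \<in> Oc" and nx: "norm x = 1" for p x
  proof (cases "aligned (w p) u1")
    case True
    thus ?thesis using aligned_v[OF o1 True] by simp
  next
    case False
    have "exp (m * e p) \<le> exp (m*M)" using hB[OF p False] m by (simp add: mult_left_mono)
    moreover have "\<bar>w p \<bullet> x\<bar> \<le> 1" using inner_le1(1)[OF unit[OF p] nx] .
    moreover have "\<bar>v1 \<bullet> w p\<bar> \<le> 1" using inner_le1(1)[OF u1n(2) unit[OF p]] .
    ultimately have "exp (m * e p) * \<bar>w p \<bullet> x\<bar> * \<bar>v1 \<bullet> w p\<bar> \<le> exp (m*M) * 1 * 1"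
      by (intro mult_mono) auto
    thus ?thesis by (simp add: abs_mult)
  qed
  have "\<sigma>2 \<le> v1 \<bullet> (S *v v1)" by (rule rayleigh(1)[OF oab Sd' ord u1n(2)])
  also have "\<dots> = (\<Sum>p\<in>Oc. exp (m * e p) * (w p \<bullet> v1) * (v1 \<bullet> w p))"
    unfolding S_def using G_form[OF fin] by simp
  also have "\<dots> \<le> (\<Sum>p\<in>Oc. exp (m*M))"
    by (rule sum_mono) (use trm u1n(2) in \<open>fastforce\<close>)
  finally show "\<sigma>2 \<le> card Oc * exp (m*M)" by simp
  have "\<sigma>1 * (v1 \<bullet> a) = v1 \<bullet> (S *v a)" using spec_vals[OF oab Sd'] by simp
  also have "\<dots> = (\<Sum>p\<in>Oc. exp (m * e p) * (w p \<bullet> a) * (v1 \<bullet> w p))"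
    unfolding S_def using G_form[OF fin] by simp
  finally have "\<bar>\<sigma>1 * (v1 \<bullet> a)\<bar> \<le> (\<Sum>p\<in>Oc. \<bar>exp (m * e p) * (w p \<bullet> a) * (v1 \<bullet> w p)\<bar>)"
    using sum_abs by metis
  also have "\<dots> \<le> (\<Sum>p\<in>Oc. exp (m*M))"
    by (rule sum_mono) (use trm an(1) in auto)
  finally show "\<bar>\<sigma>1 * (v1 \<bullet> a)\<bar> \<le> card Oc * exp (m*M)" by simp
qed

lemma norm_outer: "norm (outer (a::real^2) b) = norm a * norm b"
proof -
  have r: "outer a b $ i = a $ i *\<^sub>R b" for i by (simp add: vec_eq_iff)
  have "norm (outer a b) = L2_set (\<lambda>i. \<bar>a $ i\<bar> * norm b) UNIV"
    unfolding norm_vec_def[of "outer a b"] r by simp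
  also have "\<dots> = L2_set (\<lambda>i. \<bar>a $ i\<bar>) UNIV * norm b"
    by (simp add: L2_set_left_distrib)
  also have "L2_set (\<lambda>i. \<bar>a $ i\<bar>) UNIV = norm a" by (simp add: norm_vec_def)
  finally show ?thesis .
qed

lemma null_bounded:
  fixes P :: "'a \<Rightarrow> 'b::real_normed_vector"
  assumes c: "(c \<longlongrightarrow> 0) F" and B: "eventually (\<lambda>x. norm (P x) \<le> B) F"
  shows "((\<lambda>x. c x *\<^sub>R P x) \<longlongrightarrow> 0) F"
proof (rule Lim_null_comparison)
  show "eventually (\<lambda>x. norm (c x *\<^sub>R P x) \<le> \<bar>c x\<bar> * B) F"
    using B by eventually_elim (simp add: mult_left_mono)
  have "((\<lambda>x. \<bar>c x\<bar>) \<longlongrightarrow> 0) F" using c by (rule tendsto_rabs_zero)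
  thus "((\<lambda>x. \<bar>c x\<bar> * B) \<longlongrightarrow> 0) F" by (rule tendsto_mult_left_zero)
qed

lemma inv_lim: "((\<lambda>m::real. c + k / m) \<longlongrightarrow> c) at_top"
proof -
  have "((\<lambda>m::real. k / m) \<longlongrightarrow> 0) at_top"
    by (rule tendsto_divide_0[OF tendsto_const]) (rule filterlim_at_top_imp_at_infinity[OF filterlim_ident])
  from tendsto_add[OF tendsto_const this] show ?thesis by simp
qed

lemma ln_squeeze:
  fixes K1 K2 c :: real and \<sigma> :: "real \<Rightarrow> real"
  assumes K1: "K1 > 0" and K2: "K2 > 0"
    and ev: "eventually (\<lambda>m. K1 * exp (m*c) \<le> \<sigma> m \<and> \<sigma> m \<le> K2 * exp (m*c)) at_top"
  shows "((\<lambda>m. ln (\<sigma> m) / m) \<longlongrightarrow> c) at_top"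
proof (rule tendsto_sandwich[where f="\<lambda>m. c + ln K1 / m" and h="\<lambda>m. c + ln K2 / m"])
  have ev2: "eventually (\<lambda>m. m > 0 \<and> K1 * exp (m*c) \<le> \<sigma> m \<and> \<sigma> m \<le> K2 * exp (m*c)) (at_top::real filter)"
    using ev eventually_gt_at_top[of 0] by eventually_elim auto
  show "eventually (\<lambda>m. c + ln K1 / m \<le> ln (\<sigma> m) / m) at_top"
    using ev2
  proof eventually_elim
    case (elim m)
    hence pos: "K1 * exp (m*c) > 0" using K1 by simp
    have "ln (K1 * exp (m*c)) \<le> ln (\<sigma> m)" using elim pos by (subst ln_le_cancel_iff) auto
    hence "ln K1 + m*c \<le> ln (\<sigma> m)" using K1 by (simp add: ln_mult)
    hence "(ln K1 + m*c) / m \<le> ln (\<sigma> m) / m" using elim by (simp add: divide_right_mono)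
    thus ?case using elim by (simp add: add_divide_distrib)
  qed
  show "eventually (\<lambda>m. ln (\<sigma> m) / m \<le> c + ln K2 / m) at_top"
    using ev2
  proof eventually_elim
    case (elim m)
    hence pos: "\<sigma> m > 0" using K1 by (metis exp_gt_zero mult_pos_pos order_less_le_trans)
    have "ln (\<sigma> m) \<le> ln (K2 * exp (m*c))" using elim pos by (subst ln_le_cancel_iff) auto
    hence "ln (\<sigma> m) \<le> ln K2 + m*c" using K2 by (simp add: ln_mult)
    hence "ln (\<sigma> m) / m \<le> (ln K2 + m*c) / m" using elim by (simp add: divide_right_mono)
    thus ?case using elim by (simp add: add_divide_distrib)
  qed
  show "((\<lambda>m. c + ln K1 / m) \<longlongrightarrow> c) at_top" by (rule inv_lim)
  show "((\<lambda>m. c + ln K2 / m) \<longlongrightarrow> c) at_top" by (rule inv_lim)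
qed

lemma outer_expand:
  "outer (c *\<^sub>R x + s *\<^sub>R y) (c *\<^sub>R x + s *\<^sub>R y) =
     (c*c) *\<^sub>R outer x x + (c * s) *\<^sub>R (outer x y + outer y x) + (s * s) *\<^sub>R outer y y"
  by (simp add: vec_eq_iff forall_2 algebra_simps)

lemma exp_neg_lim:
  fixes d k :: real assumes "d < 0"
  shows "((\<lambda>m. k * exp (m * d)) \<longlongrightarrow> 0) at_top"
proof -
  have "filterlim (\<lambda>m::real. d * m) at_bot at_top"
    by (rule filterlim_tendsto_neg_mult_at_bot[OF tendsto_const assms filterlim_ident])
  hence "((\<lambda>m. exp (d * m)) \<longlongrightarrow> 0) at_top"
    by (rule filterlim_compose[OF exp_at_bot])
  from tendsto_mult_right_zero[OF this, of k] show ?thesis by (simp add: mult.commute)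
qed

theorem corollary1:
  fixes n :: nat and X :: "nat \<Rightarrow> real^2^2"
    and lam mu :: "nat \<Rightarrow> real" and u v :: "nat \<Rightarrow> real^2"
  assumes "n \<ge> 1"
    and spectral: "\<And>i. i \<in> {1..n} \<Longrightarrow>
        X i = lam i *\<^sub>R outer (u i) (u i) + mu i *\<^sub>R outer (v i) (v i)
        \<and> lam i \<ge> mu i \<and> norm (u i) = 1 \<and> norm (v i) = 1 \<and> u i \<bullet> v i = 0"
    and largest: "\<And>i. i \<in> {1..n} \<Longrightarrow> lam i \<le> lam 1"
  shows "has_sup_LE n X
     (if card {p \<in> occ n. eigval lam mu p = lam 1} \<noteq> 1
         \<and> (\<exists>w. norm w = 1 \<and> (\<exists>i\<in>{1..n}. X i *v w = lam 1 *\<^sub>R w) \<and> \<not> aligned w (u 1))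
      then lam 1 *\<^sub>R mat 1
      else lam 1 *\<^sub>R outer (u 1) (u 1)
           + (Max {eigval lam mu p | p. p \<in> occ n - {(1, 0)}
                                          \<and> \<not> aligned (eigvec u v p) (u 1)})
             *\<^sub>R outer (v 1) (v 1))"
proof -
  define Oc where "Oc = occ n"
  define e where "e = eigval lam mu"
  define w where "w = eigvec u v"
  define L where "L = lam 1"
  have fin: "finite Oc" unfolding Oc_def occ_def by simp
  have inO: "p \<in> Oc \<longleftrightarrow> fst p \<in> {1..n} \<and> (snd p = 0 \<or> snd p = 1)" for p
    unfolding Oc_def occ_def by (cases p) auto
  have oi: "orthn (u i) (v i)" if "i \<in> {1..n}" for i
    using spectral[OF that] by (simp add: orthn_def)
  have unit: "norm (w p) = 1" if "p \<in> Oc" for p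
    using spectral[of "fst p"] that unfolding inO w_def eigvec_def by auto
  have le: "e p \<le> L" if "p \<in> Oc" for p
    using spectral[of "fst p"] largest[of "fst p"] that unfolding inO e_def eigval_def L_def by auto
  have n1: "1 \<in> {1..n}" using assms(1) by simp
  have p0: "(1,0) \<in> Oc" "w (1,0) = u 1" "e (1,0) = L"
    using n1 unfolding inO w_def e_def eigvec_def eigval_def L_def by auto
  have p1: "(1,1) \<in> Oc" "w (1,1) = v 1" "(1::nat,1::nat) \<noteq> (1,0)"
    using n1 unfolding inO w_def eigvec_def by auto
  have o1: "orthn (u 1) (v 1)" using oi[OF n1] .
  have v1na: "\<not> aligned (w (1,1)) (u 1)"
  proof
    assume "aligned (w (1,1)) (u 1)"
    hence "v 1 \<bullet> w (1,1) = 0" using aligned_v[OF o1] by blast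
    thus False using p1 orthn_dots[OF o1] by simp
  qed
  have cardpos: "real (card Oc) > 0" using fin p0(1) card_gt_0_iff by auto
  have Sdef: "(\<Sum>i\<in>{1..n}. mexp (m *\<^sub>R X i)) = G Oc (\<lambda>p. exp (m * e p)) w" for m
  proof -
    have "G Oc (\<lambda>p. exp (m * e p)) w
        = (\<Sum>i\<in>{1..n}. \<Sum>j\<in>{0::nat,1}. exp (m * e (i,j)) *\<^sub>R outer (w (i,j)) (w (i,j)))"
      unfolding G_def Oc_def occ_def
        sum.cartesian_product[of "\<lambda>i j. exp (m * e (i,j)) *\<^sub>R outer (w (i,j)) (w (i,j))"]
      by (simp add: case_prod_beta')
    also have "\<dots> = (\<Sum>i\<in>{1..n}. mexp (m *\<^sub>R X i))"
    proof (rule sum.cong)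
      fix i assume i: "i \<in> {1..n}"
      have "m *\<^sub>R X i = (m * lam i) *\<^sub>R outer (u i) (u i) + (m * mu i) *\<^sub>R outer (v i) (v i)"
        using spectral[OF i] by (simp add: scaleR_add_right)
      hence "mexp (m *\<^sub>R X i) = exp (m * lam i) *\<^sub>R outer (u i) (u i) + exp (m * mu i) *\<^sub>R outer (v i) (v i)"
        using mexp_spec[OF oi[OF i]] by simp
      thus "(\<Sum>j\<in>{0::nat,1}. exp (m * e (i,j)) *\<^sub>R outer (w (i,j)) (w (i,j))) = mexp (m *\<^sub>R X i)"
        by (simp add: e_def w_def eigval_def eigvec_def)
    qed simp
    finally show ?thesis by simp
  qed
  have "\<forall>m. \<exists>a b s1 s2. orthn a b \<and> s2 \<le> s1 \<and> G Oc (\<lambda>p. exp (m * e p)) w = s1 *\<^sub>R outer a a + s2 *\<^sub>R outer b b"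
    using spectral2[OF G_sym[OF fin]] by blast
  then obtain A B s1 s2 where dec: "\<And>m. orthn (A m) (B m)" "\<And>m. s2 m \<le> s1 m"
     "\<And>m. G Oc (\<lambda>p. exp (m * e p)) w = s1 m *\<^sub>R outer (A m) (A m) + s2 m *\<^sub>R outer (B m) (B m)"
    by metis
  have bnd: "exp (m*L) \<le> s1 m" "s1 m \<le> card Oc * exp (m*L)"
     "(v 1 \<bullet> w ps)^2 / 2 * exp (m * e ps) \<le> s2 m"
    if "ps \<in> Oc" "ps \<noteq> (1,0)" "\<not> aligned (w ps) (u 1)" "m \<ge> 0" for ps m
    using bounds[OF fin unit le p0 that(1,2,3) o1 dec(3) dec(1) dec(2) that(4)] by auto
  have s2pos: "s2 m > 0" "s1 m > 0" if "m \<ge> 0" for m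
  proof -
    have "(v 1 \<bullet> w (1,1))^2 / 2 * exp (m * e (1,1)) \<le> s2 m"
      using bnd(3)[OF p1(1) p1(3) v1na that] .
    moreover have "(v 1 \<bullet> w (1,1))^2 > 0" using not_aligned_beta[OF o1 unit[OF p1(1)] v1na] .
    ultimately show "s2 m > 0" by (smt (verit) exp_gt_zero mult_pos_pos half_gt_zero)
    thus "s1 m > 0" using dec(2)[of m] by simp
  qed
  define f where "f m = (1 / m) *\<^sub>R mlog (\<Sum>i\<in>{1..n}. mexp (m *\<^sub>R X i))" for m
  have feq: "f m = (ln (s1 m) / m) *\<^sub>R outer (A m) (A m) + (ln (s2 m) / m) *\<^sub>R outer (B m) (B m)"
    if "m > 0" for m
    using that s2pos[of m] mlog_spec[OF dec(1)[of m], of "s1 m" "s2 m"]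
    unfolding f_def Sdef dec(3) by (simp add: scaleR_add_right)
  have lim1: "((\<lambda>m. ln (s1 m) / m) \<longlongrightarrow> L) at_top"
  proof (rule ln_squeeze[OF _ cardpos])
    show "eventually (\<lambda>m. 1 * exp (m*L) \<le> s1 m \<and> s1 m \<le> real (card Oc) * exp (m*L)) at_top"
      using eventually_ge_at_top[of 0]
      by eventually_elim (use bnd(1,2) p1 v1na in auto)
  qed simp
  have ev_pos: "eventually (\<lambda>m::real. m > 0) at_top" by (rule eventually_gt_at_top)
  have nP: "norm (outer (A m) (A m)) \<le> 1" "norm (outer (B m) (B m)) \<le> 1" for m
    using dec(1)[of m] by (auto simp: norm_outer orthn_def)
  have I: "mat 1 = outer (A m) (A m) + outer (B m) (B m)" for m
    using ortho_complete dec(1)[of m] by (simp add: orthn_def)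
  show ?thesis
  proof (cases "card {p \<in> occ n. eigval lam mu p = lam 1} \<noteq> 1
         \<and> (\<exists>w. norm w = 1 \<and> (\<exists>i\<in>{1..n}. X i *v w = lam 1 *\<^sub>R w) \<and> \<not> aligned w (u 1))")
    case True
    have tgt: "(if card {p \<in> occ n. eigval lam mu p = lam 1} \<noteq> 1
         \<and> (\<exists>w. norm w = 1 \<and> (\<exists>i\<in>{1..n}. X i *v w = lam 1 *\<^sub>R w) \<and> \<not> aligned w (u 1))
      then lam 1 *\<^sub>R mat 1
      else lam 1 *\<^sub>R outer (u 1) (u 1)
           + (Max {eigval lam mu p | p. p \<in> occ n - {(1, 0)}
                                          \<and> \<not> aligned (eigvec u v p) (u 1)})
             *\<^sub>R outer (v 1) (v 1)) = L *\<^sub>R mat 1"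
      using True L_def by simp
    from True obtain w0 i where w0: "norm w0 = 1" "i \<in> {1..n}" "X i *v w0 = L *\<^sub>R w0" "\<not> aligned w0 (u 1)"
      unfolding L_def by blast
    have "\<exists>ps. ps \<in> Oc \<and> ps \<noteq> (1,0) \<and> \<not> aligned (w ps) (u 1) \<and> e ps = L"
    proof -
      have sp: "X i = lam i *\<^sub>R outer (u i) (u i) + mu i *\<^sub>R outer (v i) (v i)" "mu i \<le> lam i"
        using spectral[OF w0(2)] by auto
      have oii: "orthn (u i) (v i)" using oi[OF w0(2)] .
      have d: "u i \<bullet> u i = 1" "v i \<bullet> v i = 1" "u i \<bullet> v i = 0" "v i \<bullet> u i = 0" using orthn_dots[OF oii] by auto
      have Xw: "X i *v w0 = (lam i * (u i \<bullet> w0)) *\<^sub>R u i + (mu i * (v i \<bullet> w0)) *\<^sub>R v i"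
        using spec_apply[OF oii] sp by simp
      have ex: "w0 = (u i \<bullet> w0) *\<^sub>R u i + (v i \<bullet> w0) *\<^sub>R v i" by (rule expand[OF oii])
      have c1: "lam i * (u i \<bullet> w0) = L * (u i \<bullet> w0)"
      proof -
        have "u i \<bullet> (X i *v w0) = lam i * (u i \<bullet> w0)" unfolding Xw using d by (simp add: inner_add_right)
        moreover have "u i \<bullet> (X i *v w0) = L * (u i \<bullet> w0)" unfolding w0(3) by simp
        ultimately show ?thesis by linarith
      qed
      have c2: "mu i * (v i \<bullet> w0) = L * (v i \<bullet> w0)"
      proof -
        have "v i \<bullet> (X i *v w0) = mu i * (v i \<bullet> w0)" unfolding Xw using d by (simp add: inner_add_right)
        moreover have "v i \<bullet> (X i *v w0) = L * (v i \<bullet> w0)" unfolding w0(3) by simp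
        ultimately show ?thesis by linarith
      qed
      have i0: "(i,0) \<in> Oc" "w (i,0) = u i" "e (i,0) = lam i" "(i,1) \<in> Oc" "w (i,1) = v i" "e (i,1) = mu i"
        using w0(2) unfolding inO w_def e_def eigvec_def eigval_def by auto
      show ?thesis
      proof (cases "v i \<bullet> w0 = 0")
        case True
        then have w0e: "w0 = (u i \<bullet> w0) *\<^sub>R u i" using ex by simp
        have "(u i \<bullet> w0)^2 = 1" using expand_sq[OF oii, of w0] True w0(1) by (simp add: norm_eq_1)
        hence pm: "u i \<bullet> w0 = 1 \<or> u i \<bullet> w0 = -1" by (simp add: power2_eq_1_iff)
        hence lL: "lam i = L" using c1 by auto
        have na: "\<not> aligned (u i) (u 1)"
        proof
          assume "aligned (u i) (u 1)"
          hence "aligned w0 (u 1)" using pm w0e unfolding aligned_def by auto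
          with w0(4) show False by simp
        qed
        have "(i,0) \<noteq> (1::nat,0::nat)" using na unfolding aligned_def by auto
        thus ?thesis using i0 na lL by (intro exI[of _ "(i,0)"]) auto
      next
        case False
        hence muL: "mu i = L" using c2 by simp
        show ?thesis
        proof (cases "aligned (v i) (u 1)")
          case False
          thus ?thesis using i0 muL by (intro exI[of _ "(i,1)"]) auto
        next
          case True
          have lL: "lam i = L" using muL sp(2) largest[OF w0(2)] L_def by linarith
          have u11: "u 1 \<bullet> u 1 = 1" using orthn_dots[OF o1] by simp
          have na: "\<not> aligned (u i) (u 1)"
          proof
            assume "aligned (u i) (u 1)"
            thus False using True d(3) u11 unfolding aligned_def by auto
          qed
          have "(i,0) \<noteq> (1::nat,0::nat)" using na unfolding aligned_def by auto
          thus ?thesis using i0 na lL by (intro exI[of _ "(i,0)"]) auto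
        qed
      qed
    qed
    then obtain ps where ps: "ps \<in> Oc" "ps \<noteq> (1,0)" "\<not> aligned (w ps) (u 1)" "e ps = L" by blast
    have kpos: "(v 1 \<bullet> w ps)^2 / 2 > 0" using not_aligned_beta[OF o1 unit[OF ps(1)] ps(3)] by simp
    have lim2: "((\<lambda>m. ln (s2 m) / m) \<longlongrightarrow> L) at_top"
    proof (rule ln_squeeze[OF kpos cardpos])
      show "eventually (\<lambda>m. (v 1 \<bullet> w ps)^2 / 2 * exp (m*L) \<le> s2 m \<and> s2 m \<le> real (card Oc) * exp (m*L)) at_top"
        using eventually_ge_at_top[of 0]
      proof eventually_elim
        case (elim m)
        show ?case using bnd[OF ps(1,2,3) elim] ps(4) dec(2)[of m] by auto
      qed
    qed
    have z1: "((\<lambda>m. ln (s1 m) / m - L) \<longlongrightarrow> 0) at_top" using LIM_zero[OF lim1] .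
    have z2: "((\<lambda>m. ln (s2 m) / m - L) \<longlongrightarrow> 0) at_top" using LIM_zero[OF lim2] .
    have "((\<lambda>m. L *\<^sub>R mat 1 + ((ln (s1 m) / m - L) *\<^sub>R outer (A m) (A m)
            + (ln (s2 m) / m - L) *\<^sub>R outer (B m) (B m))) \<longlongrightarrow> L *\<^sub>R mat 1 + (0 + 0)) at_top"
      by (intro tendsto_add tendsto_const null_bounded[OF z1, where B=1] null_bounded[OF z2, where B=1])
         (simp_all add: nP)
    hence lim0: "((\<lambda>m. L *\<^sub>R mat 1 + ((ln (s1 m) / m - L) *\<^sub>R outer (A m) (A m)
            + (ln (s2 m) / m - L) *\<^sub>R outer (B m) (B m))) \<longlongrightarrow> L *\<^sub>R mat 1) at_top" by simp
    have ev: "eventually (\<lambda>m. L *\<^sub>R mat 1 + ((ln (s1 m) / m - L) *\<^sub>R outer (A m) (A m)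
            + (ln (s2 m) / m - L) *\<^sub>R outer (B m) (B m)) = f m) at_top"
      using ev_pos
    proof eventually_elim
      case (elim m)
      show ?case unfolding feq[OF elim] I[of m] by (simp add: algebra_simps)
    qed
    have lim: "(f \<longlongrightarrow> L *\<^sub>R mat 1) at_top" using lim0 tendsto_cong[OF ev] by simp
    show ?thesis unfolding has_sup_LE_def tgt using lim unfolding f_def .
  next
    case False
    define Ms where "Ms = {eigval lam mu p | p. p \<in> occ n - {(1, 0)} \<and> \<not> aligned (eigvec u v p) (u 1)}"
    define Mx where "Mx = Max Ms"
    have tgt: "(if card {p \<in> occ n. eigval lam mu p = lam 1} \<noteq> 1
         \<and> (\<exists>w. norm w = 1 \<and> (\<exists>i\<in>{1..n}. X i *v w = lam 1 *\<^sub>R w) \<and> \<not> aligned w (u 1))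
      then lam 1 *\<^sub>R mat 1
      else lam 1 *\<^sub>R outer (u 1) (u 1)
           + (Max {eigval lam mu p | p. p \<in> occ n - {(1, 0)}
                                          \<and> \<not> aligned (eigvec u v p) (u 1)})
             *\<^sub>R outer (v 1) (v 1)) = L *\<^sub>R outer (u 1) (u 1) + Mx *\<^sub>R outer (v 1) (v 1)"
      unfolding Mx_def Ms_def L_def by (rule if_not_P[OF False])
    have Ms_eq: "Ms = e ` {p \<in> Oc - {(1,0)}. \<not> aligned (w p) (u 1)}"
      unfolding Ms_def e_def w_def Oc_def by auto
    have Msfin: "finite Ms" unfolding Ms_eq using fin by simp
    have Msne: "Ms \<noteq> {}"
    proof -
      have "(1,1) \<in> {p \<in> Oc - {(1,0)}. \<not> aligned (w p) (u 1)}" using p1 v1na by auto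
      thus ?thesis unfolding Ms_eq by blast
    qed
    have "Mx \<in> Ms" unfolding Mx_def using Msfin Msne by (rule Max_in)
    then obtain ps where ps: "ps \<in> Oc" "ps \<noteq> (1,0)" "\<not> aligned (w ps) (u 1)" "e ps = Mx"
      unfolding Ms_eq by auto
    have hB: "e p \<le> Mx" if "p \<in> Oc" "\<not> aligned (w p) (u 1)" for p
    proof -
      have "p \<noteq> (1,0)" using that p0(2) unfolding aligned_def by auto
      hence "e p \<in> Ms" using that unfolding Ms_eq by auto
      thus ?thesis unfolding Mx_def using Msfin by simp
    qed
    have Mlt: "Mx < L"
    proof (rule ccontr)
      assume "\<not> Mx < L"
      hence eL: "e ps = L" using le[OF ps(1)] ps(4) by simp
      have c2: "card {p \<in> occ n. eigval lam mu p = lam 1} \<noteq> 1"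
      proof -
        have "{(1,0), ps} \<subseteq> {p \<in> occ n. eigval lam mu p = lam 1}"
          using p0 ps eL unfolding Oc_def e_def L_def by auto
        moreover have "finite {p \<in> occ n. eigval lam mu p = lam 1}" using fin unfolding Oc_def by simp
        ultimately have "card {(1,0), ps} \<le> card {p \<in> occ n. eigval lam mu p = lam 1}" by (simp add: card_mono)
        moreover have "card {(1::nat,0::nat), ps} = 2" using ps(2) by simp
        ultimately show ?thesis by linarith
      qed
      have "\<exists>i\<in>{1..n}. X i *v w ps = lam 1 *\<^sub>R w ps"
      proof -
        obtain i j where pij: "ps = (i,j)" by fastforce
        have i: "i \<in> {1..n}" "j = 0 \<or> j = 1" using ps(1) pij inO by auto
        have sp: "X i = lam i *\<^sub>R outer (u i) (u i) + mu i *\<^sub>R outer (v i) (v i)"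
          using spectral[OF i(1)] by auto
        have d: "u i \<bullet> u i = 1" "v i \<bullet> v i = 1" "u i \<bullet> v i = 0" "v i \<bullet> u i = 0"
          using orthn_dots[OF oi[OF i(1)]] by auto
        have "X i *v w ps = e ps *\<^sub>R w ps"
          using i(2) unfolding sp spec_apply[OF oi[OF i(1)]] pij w_def e_def eigvec_def eigval_def
          by (auto simp: d)
        thus ?thesis using eL L_def i(1) by auto
      qed
      hence "card {p \<in> occ n. eigval lam mu p = lam 1} \<noteq> 1
         \<and> (\<exists>w. norm w = 1 \<and> (\<exists>i\<in>{1..n}. X i *v w = lam 1 *\<^sub>R w) \<and> \<not> aligned w (u 1))"
        using c2 unit[OF ps(1)] ps(3) by blast
      thus False using False by simp
    qed
    have kpos: "(v 1 \<bullet> w ps)^2 / 2 > 0" using not_aligned_beta[OF o1 unit[OF ps(1)] ps(3)] by simp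
    have bB: "s2 m \<le> card Oc * exp (m*Mx)" "\<bar>s1 m * (v 1 \<bullet> A m)\<bar> \<le> card Oc * exp (m*Mx)"
      if "m \<ge> 0" for m
      using boundsB[OF fin unit hB o1 dec(3) dec(1) dec(2) that] by auto
    have lim2: "((\<lambda>m. ln (s2 m) / m) \<longlongrightarrow> Mx) at_top"
    proof (rule ln_squeeze[OF kpos cardpos])
      show "eventually (\<lambda>m. (v 1 \<bullet> w ps)^2 / 2 * exp (m*Mx) \<le> s2 m \<and> s2 m \<le> real (card Oc) * exp (m*Mx)) at_top"
        using eventually_ge_at_top[of 0]
      proof eventually_elim
        case (elim m)
        show ?case using bnd(3)[OF ps(1,2,3) elim] ps(4) bB(1)[OF elim] by auto
      qed
    qed
    define c where "c m = u 1 \<bullet> A m" for m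
    define s where "s m = v 1 \<bullet> A m" for m
    have sA: "(s \<longlongrightarrow> 0) at_top"
    proof (rule Lim_null_comparison)
      show "eventually (\<lambda>m. norm (s m) \<le> real (card Oc) * exp (m * (Mx - L))) at_top"
        using eventually_ge_at_top[of 0]
      proof eventually_elim
        case (elim m)
        have e1: "exp (m*L) \<le> s1 m" using bnd(1)[OF p1(1) p1(3) v1na elim] .
        have "exp (m*L) * \<bar>s m\<bar> \<le> s1 m * \<bar>s m\<bar>" using e1 by (simp add: mult_right_mono)
        also have "\<dots> = \<bar>s1 m * s m\<bar>" using s2pos(2)[OF elim] by (simp add: abs_mult)
        also have "\<dots> \<le> real (card Oc) * exp (m*Mx)" using bB(2)[OF elim] unfolding s_def .
        finally have "\<bar>s m\<bar> \<le> real (card Oc) * exp (m*Mx) / exp (m*L)"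
          by (simp add: field_simps)
        also have "\<dots> = real (card Oc) * exp (m * (Mx - L))"
          by (simp add: exp_diff right_diff_distrib)
        finally show ?case by simp
      qed
      show "((\<lambda>m. real (card Oc) * exp (m * (Mx - L))) \<longlongrightarrow> 0) at_top"
        by (rule exp_neg_lim) (use Mlt in simp)
    qed
    have Aexp: "A m = c m *\<^sub>R u 1 + s m *\<^sub>R v 1" for m
      unfolding c_def s_def by (rule expand[OF o1])
    have cc: "c m * c m = 1 - s m * s m" for m
      using expand_sq[OF o1, of "A m"] dec(1)[of m] unfolding c_def s_def
      by (simp add: orthn_def norm_eq_1 power2_eq_square)
    have cs: "((\<lambda>m. c m * s m) \<longlongrightarrow> 0) at_top"
    proof (rule Lim_null_comparison)
      show "eventually (\<lambda>m. norm (c m * s m) \<le> \<bar>s m\<bar>) at_top"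
      proof (rule always_eventually, rule allI)
        fix m
        have "\<bar>c m\<bar> \<le> 1" unfolding c_def using inner_le1(1)[of "u 1" "A m"] o1 dec(1)[of m]
          by (simp add: orthn_def)
        thus "norm (c m * s m) \<le> \<bar>s m\<bar>" by (simp add: abs_mult mult_left_le_one_le)
      qed
      show "((\<lambda>m. \<bar>s m\<bar>) \<longlongrightarrow> 0) at_top" using tendsto_rabs_zero[OF sA] .
    qed
    have ss: "((\<lambda>m. s m * s m) \<longlongrightarrow> 0) at_top" using tendsto_mult[OF sA sA] by simp
    have PA: "outer (A m) (A m) = (1 - s m * s m) *\<^sub>R outer (u 1) (u 1)
        + (c m * s m) *\<^sub>R (outer (u 1) (v 1) + outer (v 1) (u 1)) + (s m * s m) *\<^sub>R outer (v 1) (v 1)" for m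
      unfolding Aexp[of m] outer_expand cc by simp
    have Pconv: "((\<lambda>m. outer (A m) (A m)) \<longlongrightarrow> outer (u 1) (u 1)) at_top"
    proof -
      have "((\<lambda>m. (1 - s m * s m) *\<^sub>R outer (u 1) (u 1)
        + (c m * s m) *\<^sub>R (outer (u 1) (v 1) + outer (v 1) (u 1)) + (s m * s m) *\<^sub>R outer (v 1) (v 1))
         \<longlongrightarrow> (1 - 0) *\<^sub>R outer (u 1) (u 1) + 0 *\<^sub>R (outer (u 1) (v 1) + outer (v 1) (u 1)) + 0 *\<^sub>R outer (v 1) (v 1)) at_top"
        by (intro tendsto_add tendsto_scaleR tendsto_diff tendsto_const ss cs)
      thus ?thesis unfolding PA by simp
    qed
    have lim0: "((\<lambda>m. (ln (s2 m) / m) *\<^sub>R mat 1 + (ln (s1 m) / m - ln (s2 m) / m) *\<^sub>R outer (A m) (A m))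
        \<longlongrightarrow> Mx *\<^sub>R mat 1 + (L - Mx) *\<^sub>R outer (u 1) (u 1)) at_top"
      by (intro tendsto_add tendsto_scaleR tendsto_diff tendsto_const lim1 lim2 Pconv)
    have ev: "eventually (\<lambda>m. (ln (s2 m) / m) *\<^sub>R mat 1 + (ln (s1 m) / m - ln (s2 m) / m) *\<^sub>R outer (A m) (A m) = f m) at_top"
      using ev_pos
    proof eventually_elim
      case (elim m)
      show ?case unfolding feq[OF elim] I[of m] by (simp add: algebra_simps)
    qed
    have teq: "Mx *\<^sub>R mat 1 + (L - Mx) *\<^sub>R outer (u 1) (u 1) = L *\<^sub>R outer (u 1) (u 1) + Mx *\<^sub>R outer (v 1) (v 1)"
    proof -
      have I1: "mat 1 = outer (u 1) (u 1) + outer (v 1) (v 1)" using ortho_complete o1 by (simp add: orthn_def)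
      show ?thesis unfolding I1 by (simp add: algebra_simps)
    qed
    have lim: "(f \<longlongrightarrow> L *\<^sub>R outer (u 1) (u 1) + Mx *\<^sub>R outer (v 1) (v 1)) at_top"
      using lim0 tendsto_cong[OF ev] teq by simp
    show ?thesis unfolding has_sup_LE_def tgt using lim unfolding f_def .
  qed
qed

end
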